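(* Let $w$ be a word over a finite alphabet $A$, $H$ a graph on $A$ with loops allowed, and $G=G_{w,H}(u_1,\dots,u_n)$. Suppose $G$ is a strong $(\ell,d)$-graph and its sparsification $\phi(G)$ has a connected component $C$ with $|C|\ge(2d'^2\ell^2|H|^2+1)(m-1)+1$, where $d'=\max\{d,2\}$ and $m$ is a positive integer. Then $V(C)$ contains a set of $m$ consecutive integers.
   Context: For positive integers $u_1<\dots<u_n\le|w|$, $G_{w,H}(u_1,\dots,u_n)$ is the graph on $\{u_1,\dots,u_n\}$ in which $u_iu_j$ is an edge iff ($|u_i-u_j|=1$ and $w_{u_i}w_{u_j}\notin E(H)$) or ($|u_i-u_j|>1$ and $w_{u_i}w_{u_j}\in E(H)$) (for equal letters $a$, a loop at $a$); $|H|$ is the number of vertices of $H$. For $U,W\subseteq V(G)$ let $\Delta(U,W)=\max\{|N(u)\cap W|,|N(x)\cap U|:u\in U,x\in W\}$ and $\overline\Delta(U,W)$ the same with $\overline N(v)=V(G)\setminus(N(v)\cup\{v\})$ in place of $N$. A partition $\pi=\{V_1,\dots,V_{\ell'}\}$ of $V(G)$ is an $(\ell,d)$-partition if $\ell'\le\ell$ and for all not necessarily distinct $i,j$, $(V_i,V_j)$ is $d$-sparse ($\Delta(V_i,V_j)\le d$) or $d$-dense ($\overline\Delta(V_i,V_j)\le d$); it is strong if every bag has at least $5\cdot2^\ell d$ vertices; a strong $(\ell,d)$-graph admits one. Its density graph $H(G,\pi)$ has vertices $1,\dots,\ell'$ and an edge (loop when $i=j$) $ij$ iff $(V_i,V_j)$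 is $d$-dense. For a partition $\pi$ and graph $H'$ with loops on $\{1,\dots,\ell'\}$, $\psi(G,\pi,H')$ is obtained from $G$ by replacing the bipartite graph between $V_i$ and $V_j$ by its bipartite complement for each edge $ij$ of $H'$ with $i\neq j$, and replacing $G[V_i]$ by its complement for each loop at $i$. The sparsification is $\phi(G)=\psi(G,\pi,H(G,\pi))$ for any strong $(\ell,d)$-partition $\pi$ (it does not depend on the choice of $\pi$). *)

theory Defs
  imports Main "HOL-Library.Disjoint_Sets"
begin

text \<open>A graph is given by a vertex set V and an adjacency relation E
(only its restriction to V matters; it is meant to be symmetric and loopless).\<close>

definition nbh :: "'v set \<Rightarrow> ('v \<Rightarrow> 'v \<Rightarrow> bool) \<Rightarrow> 'v \<Rightarrow> 'v set" where
  "nbh V E v = {x \<in> V. E v x}"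

definition nonnbh :: "'v set \<Rightarrow> ('v \<Rightarrow> 'v \<Rightarrow> bool) \<Rightarrow> 'v \<Rightarrow> 'v set" where
  "nonnbh V E v = V - (nbh V E v \<union> {v})"

definition sparse_pair :: "'v set \<Rightarrow> ('v \<Rightarrow> 'v \<Rightarrow> bool) \<Rightarrow> nat \<Rightarrow> 'v set \<Rightarrow> 'v set \<Rightarrow> bool" where
  "sparse_pair V E d U W \<longleftrightarrow>
     (\<forall>u\<in>U. card (nbh V E u \<inter> W) \<le> d) \<and> (\<forall>x\<in>W. card (nbh V E x \<inter> U) \<le> d)"

definition dense_pair :: "'v set \<Rightarrow> ('v \<Rightarrow> 'v \<Rightarrow> bool) \<Rightarrow> nat \<Rightarrow> 'v set \<Rightarrow> 'v set \<Rightarrow> bool" where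
  "dense_pair V E d U W \<longleftrightarrow>
     (\<forall>u\<in>U. card (nonnbh V E u \<inter> W) \<le> d) \<and> (\<forall>x\<in>W. card (nonnbh V E x \<inter> U) \<le> d)"

definition ld_partition :: "'v set \<Rightarrow> ('v \<Rightarrow> 'v \<Rightarrow> bool) \<Rightarrow> nat \<Rightarrow> nat \<Rightarrow> 'v set set \<Rightarrow> bool" where
  "ld_partition V E l d P \<longleftrightarrow> partition_on V P \<and> card P \<le> l \<and>
     (\<forall>X\<in>P. \<forall>Y\<in>P. sparse_pair V E d X Y \<or> dense_pair V E d X Y)"

definition strong_ld_partition :: "'v set \<Rightarrow> ('v \<Rightarrow> 'v \<Rightarrow> bool) \<Rightarrow> nat \<Rightarrow> nat \<Rightarrow> 'v set set \<Rightarrow> bool" where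
  "strong_ld_partition V E l d P \<longleftrightarrow> ld_partition V E l d P \<and>
     (\<forall>X\<in>P. card X \<ge> 5 * 2 ^ l * d)"

definition strong_ld_graph :: "'v set \<Rightarrow> ('v \<Rightarrow> 'v \<Rightarrow> bool) \<Rightarrow> nat \<Rightarrow> nat \<Rightarrow> bool" where
  "strong_ld_graph V E l d \<longleftrightarrow> (\<exists>P. strong_ld_partition V E l d P)"

text \<open>Density graph H(G,pi), with the bags themselves as vertices (X = Y gives a loop).\<close>
definition density_graph :: "'v set \<Rightarrow> ('v \<Rightarrow> 'v \<Rightarrow> bool) \<Rightarrow> nat \<Rightarrow> 'v set set \<Rightarrow> 'v set \<Rightarrow> 'v set \<Rightarrow> bool" where
  "density_graph V E d P X Y \<longleftrightarrow> X \<in> P \<and> Y \<in> P \<and> dense_pair V E d X Y"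

definition psi :: "'v set \<Rightarrow> ('v \<Rightarrow> 'v \<Rightarrow> bool) \<Rightarrow> 'v set set \<Rightarrow> ('v set \<Rightarrow> 'v set \<Rightarrow> bool)
                    \<Rightarrow> 'v \<Rightarrow> 'v \<Rightarrow> bool" where
  "psi V E P H' x y \<longleftrightarrow> x \<in> V \<and> y \<in> V \<and> x \<noteq> y \<and>
     (E x y \<noteq> (\<exists>X\<in>P. \<exists>Y\<in>P. x \<in> X \<and> y \<in> Y \<and> H' X Y))"

definition sparsification :: "'v set \<Rightarrow> ('v \<Rightarrow> 'v \<Rightarrow> bool) \<Rightarrow> nat \<Rightarrow> nat \<Rightarrow> 'v \<Rightarrow> 'v \<Rightarrow> bool" where
  "sparsification V E l d =
     (let P = (SOME P. strong_ld_partition V E l d P) in psi V E P (density_graph V E d P))"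

definition is_component :: "'v set \<Rightarrow> ('v \<Rightarrow> 'v \<Rightarrow> bool) \<Rightarrow> 'v set \<Rightarrow> bool" where
  "is_component V E C \<longleftrightarrow>
     (\<exists>x\<in>V. C = {y. (\<lambda>a b. a \<in> V \<and> b \<in> V \<and> E a b)\<^sup>*\<^sup>* x y})"

text \<open>Adjacency of G_{w,H}: positions are 1-based, letter at position u is w ! (u - 1).\<close>
definition wH_edge :: "'a list \<Rightarrow> ('a \<Rightarrow> 'a \<Rightarrow> bool) \<Rightarrow> nat \<Rightarrow> nat \<Rightarrow> bool" where
  "wH_edge w HE x y \<longleftrightarrow>
     ((x + 1 = y \<or> y + 1 = x) \<and> \<not> HE (w ! (x - 1)) (w ! (y - 1))) \<or>
     ((x + 1 < y \<or> y + 1 < x) \<and> HE (w ! (x - 1)) (w ! (y - 1)))"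

end

theory Submission
  imports Defs
begin

lemma arith_aux:
  fixes k d :: nat
  shows "k * (d + 3) \<le> 2 * (max d 2)^2 * k^2"
proof -
  define D where "D = max d 2"
  have D2: "D \<ge> 2" "d \<le> D" by (auto simp: D_def)
  have "2 * D \<le> D * D" using D2 by (simp add: mult_right_mono)
  hence "d + 3 \<le> 2 * (D * D)" using D2 by linarith
  hence "d + 3 \<le> 2 * D^2" by (simp add: power2_eq_square)
  moreover have "k \<le> k * k" by (cases k) auto
  ultimately have "k * (d + 3) \<le> (k * k) * (2 * D^2)" by (simp add: mult_le_mono)
  thus ?thesis by (simp add: D_def power2_eq_square algebra_simps)
qed

theorem lemma3p9:
  fixes w :: "'a list" and A :: "'a set" and HE :: "'a \<Rightarrow> 'a \<Rightarrow> bool"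
    and U :: "nat set" and l d m :: nat and C :: "nat set"
  assumes "finite A"
    and "set w \<subseteq> A"
    and "\<forall>a b. HE a b \<longrightarrow> a \<in> A \<and> b \<in> A"
    and "\<forall>a b. HE a b \<longrightarrow> HE b a"
    and "U \<subseteq> {1..length w}"
    and "strong_ld_graph U (wH_edge w HE) l d"
    and "0 < m"
    and "is_component U (sparsification U (wH_edge w HE) l d) C"
    and "card C \<ge> (2 * (max d 2)^2 * l^2 * (card A)^2 + 1) * (m - 1) + 1"
  shows "\<exists>a. {a..<a + m} \<subseteq> C"
proof (rule ccontr)
  assume nocons: "\<not> (\<exists>a. {a..<a + m} \<subseteq> C)"
  define E where "E = wH_edge w HE"
  define P where "P = (SOME P. strong_ld_partition U E l d P)"
  have sP: "strong_ld_partition U E l d P"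
    using assms(6) unfolding P_def E_def strong_ld_graph_def by (rule someI_ex)
  hence part: "partition_on U P" and cardP: "card P \<le> l"
    and sd: "\<forall>X\<in>P. \<forall>Y\<in>P. sparse_pair U E d X Y \<or> dense_pair U E d X Y"
    by (auto simp: strong_ld_partition_def ld_partition_def)
  define phi where "phi = sparsification U E l d"
  have phi_eq: "phi = psi U E P (density_graph U E d P)"
    by (simp add: phi_def sparsification_def Let_def P_def)
  have finU: "finite U" using assms(5) finite_subset by blast
  have UP: "U = \<Union>P" using part partition_onD1 by blast
  have bag: "\<And>a X X'. a \<in> X \<Longrightarrow> X \<in> P \<Longrightarrow> a \<in> X' \<Longrightarrow> X' \<in> P \<Longrightarrow> X = X'"
    using partition_onD2[OF part] unfolding disjoint_def by blast
  have finP: "finite P" using finU UP finite_UnionD by metis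
  have phi_iff: "\<And>a v X Y. X \<in> P \<Longrightarrow> Y \<in> P \<Longrightarrow> a \<in> X \<Longrightarrow> v \<in> Y \<Longrightarrow>
      phi a v \<longleftrightarrow> a \<noteq> v \<and> (E a v \<noteq> dense_pair U E d X Y)"
  proof -
    fix a v X Y assume h: "X \<in> P" "Y \<in> P" "a \<in> X" "v \<in> Y"
    have "a \<in> U" "v \<in> U" using h UP by auto
    moreover have "(\<exists>X'\<in>P. \<exists>Y'\<in>P. a \<in> X' \<and> v \<in> Y' \<and> density_graph U E d P X' Y')
        \<longleftrightarrow> dense_pair U E d X Y"
    proof
      assume "\<exists>X'\<in>P. \<exists>Y'\<in>P. a \<in> X' \<and> v \<in> Y' \<and> density_graph U E d P X' Y'"
      then obtain X' Y' where "X' \<in> P" "Y' \<in> P" "a \<in> X'" "v \<in> Y'" "dense_pair U E d X' Y'"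
        unfolding density_graph_def by blast
      moreover have "X' = X" using bag h calculation by blast
      moreover have "Y' = Y" using bag h calculation by blast
      ultimately show "dense_pair U E d X Y" by simp
    next
      assume "dense_pair U E d X Y"
      thus "\<exists>X'\<in>P. \<exists>Y'\<in>P. a \<in> X' \<and> v \<in> Y' \<and> density_graph U E d P X' Y'"
        using h unfolding density_graph_def by blast
    qed
    moreover have "phi a v = (a \<in> U \<and> v \<in> U \<and> a \<noteq> v \<and>
      (E a v \<noteq> (\<exists>X'\<in>P. \<exists>Y'\<in>P. a \<in> X' \<and> v \<in> Y' \<and> density_graph U E d P X' Y')))"
      unfolding phi_eq psi_def by (rule refl)
    ultimately show "phi a v \<longleftrightarrow> a \<noteq> v \<and> (E a v \<noteq> dense_pair U E d X Y)"
      by (simp only: simp_thms)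
  qed
  have deg: "\<And>a X Y. X \<in> P \<Longrightarrow> Y \<in> P \<Longrightarrow> a \<in> X \<Longrightarrow> card {v\<in>Y. phi a v} \<le> d"
  proof -
    fix a X Y assume h: "X \<in> P" "Y \<in> P" "a \<in> X"
    have YU: "Y \<subseteq> U" using h UP by auto
    have finY: "finite Y" using YU finU by (rule finite_subset)
    show "card {v\<in>Y. phi a v} \<le> d"
    proof (cases "dense_pair U E d X Y")
      case True
      have "{v\<in>Y. phi a v} \<subseteq> nonnbh U E a \<inter> Y"
      proof
        fix v assume v: "v \<in> {v\<in>Y. phi a v}"
        have "phi a v \<longleftrightarrow> a \<noteq> v \<and> (E a v \<noteq> dense_pair U E d X Y)"
          using v by (intro phi_iff[OF h]) simp
        hence "a \<noteq> v" "\<not> E a v" using v True by auto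
        thus "v \<in> nonnbh U E a \<inter> Y" using v YU unfolding nonnbh_def nbh_def by auto
      qed
      hence "card {v\<in>Y. phi a v} \<le> card (nonnbh U E a \<inter> Y)"
        using finY by (intro card_mono) auto
      also have "\<dots> \<le> d" using True h unfolding dense_pair_def by blast
      finally show ?thesis .
    next
      case False
      hence sp: "sparse_pair U E d X Y" using sd h by blast
      have "{v\<in>Y. phi a v} \<subseteq> nbh U E a \<inter> Y"
      proof
        fix v assume v: "v \<in> {v\<in>Y. phi a v}"
        have "phi a v \<longleftrightarrow> a \<noteq> v \<and> (E a v \<noteq> dense_pair U E d X Y)"
          using v by (intro phi_iff[OF h]) simp
        hence "E a v" using v False by auto
        thus "v \<in> nbh U E a \<inter> Y" using v YU unfolding nbh_def by auto
      qed
      hence "card {v\<in>Y. phi a v} \<le> card (nbh U E a \<inter> Y)"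
        using finY by (intro card_mono) auto
      also have "\<dots> \<le> d" using sp h unfolding sparse_pair_def by blast
      finally show ?thesis .
    qed
  qed
  have Efar: "\<And>a v. a + 1 < v \<or> v + 1 < a \<Longrightarrow> E a v = HE (w!(a-1)) (w!(v-1))"
    by (auto simp: E_def wH_edge_def)
  define Act where "Act = {v\<in>U. \<exists>a\<in>U. (a + 1 < v \<or> v + 1 < a) \<and> phi a v}"
  have finAct: "finite Act" using finU by (simp add: Act_def)
  have cardB: "\<And>X b. X \<in> P \<Longrightarrow> card {v\<in>Act. v \<in> X \<and> w!(v-1) = b} \<le> d + 3"
  proof -
    fix X b assume X: "X \<in> P"
    show "card {v\<in>Act. v \<in> X \<and> w!(v-1) = b} \<le> d + 3"
    proof (cases "{v\<in>Act. v \<in> X \<and> w!(v-1) = b} = {}")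
      case True then show ?thesis by (metis card.empty le0)
    next
      case False
      then obtain v0 where v0: "v0 \<in> Act" "v0 \<in> X" "w!(v0-1) = b" by blast
      then obtain a where a: "a \<in> U" "a + 1 < v0 \<or> v0 + 1 < a" "phi a v0"
        unfolding Act_def by blast
      obtain Xa where Xa: "Xa \<in> P" "a \<in> Xa" using a(1) UP by blast
      have sub: "{v\<in>Act. v \<in> X \<and> w!(v-1) = b} \<subseteq> {v\<in>X. phi a v} \<union> {a-1, a, a+1}"
      proof
        fix v assume v: "v \<in> {v\<in>Act. v \<in> X \<and> w!(v-1) = b}"
        show "v \<in> {v\<in>X. phi a v} \<union> {a-1, a, a+1}"
        proof (cases "a + 1 < v \<or> v + 1 < a")
          case True
          have "E a v = E a v0" using Efar[OF True] Efar[OF a(2)] v v0 by simp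
          moreover have "a \<noteq> v" using True by auto
          moreover have "E a v0 \<noteq> dense_pair U E d Xa X"
            using phi_iff[OF Xa(1) X Xa(2) v0(2)] a(3) by blast
          ultimately have "phi a v" using phi_iff[OF Xa(1) X Xa(2)] v by blast
          then show ?thesis using v by blast
        next
          case False
          hence "v = a - 1 \<or> v = a \<or> v = a + 1" by arith
          then show ?thesis by blast
        qed
      qed
      have "X \<subseteq> U" using X UP by auto
      hence finX: "finite X" using finU by (rule finite_subset)
      have "card {v\<in>Act. v \<in> X \<and> w!(v-1) = b} \<le> card ({v\<in>X. phi a v} \<union> {a-1, a, a+1})"
        using sub finX by (intro card_mono) auto
      also have "\<dots> \<le> card {v\<in>X. phi a v} + card {a-1, a, a+1}" by (rule card_Un_le)
      also have "card {a-1, a, a+1} \<le> 3"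
      proof -
        have "card (set [a-1, a, a+1]) \<le> length [a-1, a, a+1]" by (rule card_length)
        thus ?thesis by simp
      qed
      finally show ?thesis using deg[OF Xa(1) X Xa(2)] by linarith
    qed
  qed
  have Act_sub: "Act \<subseteq> (\<Union>p\<in>P \<times> A. {v\<in>Act. v \<in> fst p \<and> w!(v-1) = snd p})"
  proof
    fix v assume v: "v \<in> Act"
    hence vU: "v \<in> U" by (simp add: Act_def)
    then obtain X where "X \<in> P" "v \<in> X" using UP by blast
    moreover have "w!(v-1) \<in> A"
    proof -
      have "1 \<le> v" "v \<le> length w" using vU assms(5) by auto
      hence "w!(v-1) \<in> set w" by simp
      thus ?thesis using assms(2) by blast
    qed
    ultimately show "v \<in> (\<Union>p\<in>P \<times> A. {v\<in>Act. v \<in> fst p \<and> w!(v-1) = snd p})"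
      using v by force
  qed
  have cardAct: "card Act \<le> l * card A * (d + 3)"
  proof -
    have fin: "finite (P \<times> A)" using finP assms(1) by simp
    have "card Act \<le> card (\<Union>p\<in>P \<times> A. {v\<in>Act. v \<in> fst p \<and> w!(v-1) = snd p})"
      using Act_sub fin finAct by (intro card_mono) auto
    also have "\<dots> \<le> (\<Sum>p\<in>P \<times> A. card {v\<in>Act. v \<in> fst p \<and> w!(v-1) = snd p})"
      using fin by (rule card_UN_le)
    also have "\<dots> \<le> (\<Sum>p\<in>P \<times> A. d + 3)"
      using cardB by (intro sum_mono) auto
    also have "\<dots> = card P * card A * (d + 3)" by (simp add: card_cartesian_product)
    also have "\<dots> \<le> l * card A * (d + 3)" using cardP by simp
    finally show ?thesis .
  qed
  define R where "R = (\<lambda>a b. a \<in> U \<and> b \<in> U \<and> phi a b)"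
  have icomp: "is_component U phi C" using assms(8) by (simp add: phi_def E_def)
  obtain x where x: "x \<in> U" "C = {y. R\<^sup>*\<^sup>* x y}"
    using icomp unfolding is_component_def R_def by blast
  have xC: "x \<in> C" using x by simp
  have CU: "C \<subseteq> U"
  proof
    fix y assume "y \<in> C"
    hence "R\<^sup>*\<^sup>* x y" using x by simp
    thus "y \<in> U" by (induction rule: rtranclp_induct) (auto simp: x R_def)
  qed
  have finC: "finite C" using CU finU finite_subset by blast
  have main: "\<And>y. R\<^sup>*\<^sup>* x y \<Longrightarrow> \<exists>z\<in>insert x Act. {min z y..max z y} \<subseteq> C"
  proof -
    fix y assume "R\<^sup>*\<^sup>* x y"
    thus "\<exists>z\<in>insert x Act. {min z y..max z y} \<subseteq> C"
    proof (induction rule: rtranclp_induct)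
      case base
      then show ?case using xC by auto
    next
      case (step y y')
      have y'C: "y' \<in> C" using step x by (auto intro: rtranclp.rtrancl_into_rtrancl)
      show ?case
      proof (cases "y + 1 < y' \<or> y' + 1 < y")
        case True
        hence "y' \<in> Act" using step(2) unfolding R_def Act_def by blast
        moreover have "{min y' y'..max y' y'} \<subseteq> C" using y'C by simp
        ultimately show ?thesis by blast
      next
        case False
        from step(3) obtain z where z: "z \<in> insert x Act" "{min z y..max z y} \<subseteq> C" by blast
        have "y \<noteq> y'" using step(2) unfolding R_def phi_eq psi_def by blast
        hence "y' = y + 1 \<or> y = y' + 1" using False by arith
        hence "{min z y'..max z y'} \<subseteq> {min z y..max z y} \<union> {y'}" by auto
        then show ?thesis using z y'C by blast
      qed
    qed
  qed
  define Run where "Run = (\<lambda>z. {y\<in>C. {min z y..max z y} \<subseteq> C})"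
  have cardRun: "\<And>z. card (Run z) \<le> m - 1"
  proof -
    fix z
    show "card (Run z) \<le> m - 1"
    proof (cases "Run z = {}")
      case True then show ?thesis by simp
    next
      case False
      have fin: "finite (Run z)" using finC by (simp add: Run_def)
      define p where "p = Min (Run z)"
      define q where "q = Max (Run z)"
      have pR: "p \<in> Run z" using fin False by (simp add: p_def)
      have qR: "q \<in> Run z" using fin False by (simp add: q_def)
      have le: "\<And>y. y \<in> Run z \<Longrightarrow> p \<le> y \<and> y \<le> q" using fin by (simp add: p_def q_def)
      have pq: "{p..q} \<subseteq> C"
      proof
        fix t assume t: "t \<in> {p..q}"
        show "t \<in> C"
        proof (cases "t \<le> z")
          case True
          hence "t \<in> {min z p..max z p}" using t by auto
          thus ?thesis using pR by (auto simp: Run_def)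
        next
          case False
          hence "t \<in> {min z q..max z q}" using t by auto
          thus ?thesis using qR by (auto simp: Run_def)
        qed
      qed
      have "Run z \<subseteq> {p..q}" using le by auto
      hence "card (Run z) \<le> card {p..q}" by (intro card_mono) auto
      also have "card {p..q} \<le> m - 1"
      proof (rule ccontr)
        assume "\<not> card {p..q} \<le> m - 1"
        hence "{p..<p+m} \<subseteq> {p..q}" by auto
        thus False using pq nocons by blast
      qed
      finally show ?thesis .
    qed
  qed
  have Ccov: "C \<subseteq> (\<Union>z\<in>insert x Act. Run z)"
  proof
    fix y assume y: "y \<in> C"
    then obtain z where "z \<in> insert x Act" "{min z y..max z y} \<subseteq> C" using main x by blast
    thus "y \<in> (\<Union>z\<in>insert x Act. Run z)" using y by (auto simp: Run_def)
  qed
  have "card C \<le> card (\<Union>z\<in>insert x Act. Run z)"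
    using Ccov finAct finC by (intro card_mono) (auto simp: Run_def)
  also have "\<dots> \<le> (\<Sum>z\<in>insert x Act. card (Run z))" using finAct by (intro card_UN_le) simp
  also have "\<dots> \<le> (\<Sum>z\<in>insert x Act. m - 1)" using cardRun by (intro sum_mono) auto
  also have "\<dots> = card (insert x Act) * (m - 1)" by simp
  also have "\<dots> \<le> (1 + card Act) * (m - 1)"
    using card_insert_le_m1 finAct by (intro mult_le_mono1) (simp add: card_insert_if)
  also have "\<dots> \<le> (1 + l * card A * (d + 3)) * (m - 1)"
    using cardAct by (intro mult_le_mono1) simp
  also have "\<dots> \<le> (2 * (max d 2)^2 * l^2 * (card A)^2 + 1) * (m - 1)"
  proof -
    have "(l * card A) * (d + 3) \<le> 2 * (max d 2)^2 * (l * card A)^2" by (rule arith_aux)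
    hence "l * card A * (d + 3) \<le> 2 * (max d 2)^2 * l^2 * (card A)^2"
      by (simp add: power_mult_distrib algebra_simps)
    thus ?thesis by (intro mult_le_mono1) simp
  qed
  finally show False using assms(9) by linarith
qed

end
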